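(* Let $\delta,D\ge0$ and $(X,x,\Gamma)\in\mathcal{M}(\delta,D)$. Then the finite set $\Sigma_{2D+72\delta}(\Gamma,x)=\{g\in\Gamma:d(x,gx)\le 2D+72\delta\}$ generates $\Gamma$.
   Context: Gromov product $(y,z)_x=\frac12(d(x,y)+d(x,z)-d(y,z))$; $X$ is $\delta$-hyperbolic if $(x,z)_w\geq\min\{(x,y)_w,(y,z)_w\}-\delta$ for all points. $\Lambda(\Gamma)$: accumulation points in the Gromov boundary $\partial X$ of an orbit $\Gamma x$; elementary means $\#\Lambda(\Gamma)\le2$. $\mathrm{QC\text{-}Hull}(C)$: union of all geodesic lines with both endpoints in $C\subseteq\partial X$. Quasiconvex-cocompact with codiameter $\le D$: for all $y,y'\in\mathrm{QC\text{-}Hull}(\Lambda(\Gamma))$ there is $g\in\Gamma$ with $d(gy,y')\le D$. $\mathcal{M}(\delta,D)$: triples $(X,x,\Gamma)$, $X$ proper geodesic $\delta$-hyperbolic, $\Gamma\le\mathrm{Isom}(X)$ discrete, torsion-free, non-elementary, quasiconvex-cocompact with codiameter $\le D$, $x\in\mathrm{QC\text{-}Hull}(\Lambda(\Gamma))$. *)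

theory Defs
  imports "HOL-Analysis.Analysis"
begin

text \<open>The space X is the whole of a type 'a of class metric_space.\<close>

definition gprod :: "'a::metric_space \<Rightarrow> 'a \<Rightarrow> 'a \<Rightarrow> real" where
  "gprod w y z = (dist w y + dist w z - dist y z) / 2"

definition proper_space :: "'a::metric_space itself \<Rightarrow> bool" where
  "proper_space TYPE('a) \<longleftrightarrow> (\<forall>(x::'a) r. compact (cball x r))"

definition geodesic_space :: "'a::metric_space itself \<Rightarrow> bool" where
  "geodesic_space TYPE('a) \<longleftrightarrow> (\<forall>x y::'a. \<exists>\<gamma>::real \<Rightarrow> 'a.
      \<gamma> 0 = x \<and> \<gamma> (dist x y) = y \<and>
      (\<forall>s\<in>{0..dist x y}. \<forall>t\<in>{0..dist x y}. dist (\<gamma> s) (\<gamma> t) = \<bar>s - t\<bar>))"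

definition gromov_hyperbolic :: "real \<Rightarrow> 'a::metric_space itself \<Rightarrow> bool" where
  "gromov_hyperbolic \<delta> TYPE('a) \<longleftrightarrow>
     (\<forall>x y z w::'a. gprod w x z \<ge> min (gprod w x y) (gprod w y z) - \<delta>)"

text \<open>Both notions are basepoint-independent,
  so we quantify over all basepoints.\<close>

definition gromov_seq :: "(nat \<Rightarrow> 'a::metric_space) \<Rightarrow> bool" where
  "gromov_seq u \<longleftrightarrow> (\<forall>w M. \<exists>N. \<forall>n\<ge>N. \<forall>m\<ge>N. gprod w (u n) (u m) \<ge> M)"

definition gromov_equiv :: "(nat \<Rightarrow> 'a::metric_space) \<Rightarrow> (nat \<Rightarrow> 'a) \<Rightarrow> bool" where
  "gromov_equiv u v \<longleftrightarrow> (\<forall>w M. \<exists>N. \<forall>n\<ge>N. \<forall>m\<ge>N. gprod w (u n) (v m) \<ge> M)"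

definition gromov_class :: "(nat \<Rightarrow> 'a::metric_space) \<Rightarrow> (nat \<Rightarrow> 'a) set" where
  "gromov_class u = {v. gromov_seq v \<and> gromov_equiv u v}"

definition gromov_boundary :: "(nat \<Rightarrow> 'a::metric_space) set set" where
  "gromov_boundary = {gromov_class u | u. gromov_seq u}"

definition limit_set :: "('a::metric_space \<Rightarrow> 'a) set \<Rightarrow> 'a \<Rightarrow> (nat \<Rightarrow> 'a) set set" where
  "limit_set \<Gamma> x = {\<xi> \<in> gromov_boundary. \<exists>u. (\<forall>n. u n \<in> (\<lambda>g. g x) ` \<Gamma>) \<and> u \<in> \<xi>}"

definition geodesic_line :: "(real \<Rightarrow> 'a::metric_space) \<Rightarrow> bool" where
  "geodesic_line \<gamma> \<longleftrightarrow> (\<forall>s t. dist (\<gamma> s) (\<gamma> t) = \<bar>s - t\<bar>)"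

definition QC_Hull :: "(nat \<Rightarrow> 'a::metric_space) set set \<Rightarrow> 'a set" where
  "QC_Hull C = \<Union>{range \<gamma> | \<gamma>. geodesic_line \<gamma> \<and>
      gromov_class (\<lambda>n. \<gamma> (real n)) \<in> C \<and> gromov_class (\<lambda>n. \<gamma> (- real n)) \<in> C}"

definition isometry :: "('a::metric_space \<Rightarrow> 'a) \<Rightarrow> bool" where
  "isometry g \<longleftrightarrow> bij g \<and> (\<forall>a b. dist (g a) (g b) = dist a b)"

definition isom_subgroup :: "('a::metric_space \<Rightarrow> 'a) set \<Rightarrow> bool" where
  "isom_subgroup \<Gamma> \<longleftrightarrow> (\<forall>g\<in>\<Gamma>. isometry g) \<and> id \<in> \<Gamma> \<and>
     (\<forall>g\<in>\<Gamma>. \<forall>h\<in>\<Gamma>. g \<circ> h \<in> \<Gamma>) \<and> (\<forall>g\<in>\<Gamma>. inv g \<in> \<Gamma>)"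

text \<open>Discreteness (for isometry groups of proper spaces): orbits meet bounded sets in
  finitely many group elements.\<close>
definition discrete_action :: "('a::metric_space \<Rightarrow> 'a) set \<Rightarrow> bool" where
  "discrete_action \<Gamma> \<longleftrightarrow> (\<forall>x R. finite {g\<in>\<Gamma>. dist x (g x) \<le> R})"

definition torsion_free :: "('a \<Rightarrow> 'a) set \<Rightarrow> bool" where
  "torsion_free \<Gamma> \<longleftrightarrow> (\<forall>g\<in>\<Gamma>. \<forall>n::nat. n \<ge> 1 \<longrightarrow> g ^^ n = id \<longrightarrow> g = id)"

definition non_elementary :: "('a::metric_space \<Rightarrow> 'a) set \<Rightarrow> 'a \<Rightarrow> bool" where
  "non_elementary \<Gamma> x \<longleftrightarrow> \<not> (finite (limit_set \<Gamma> x) \<and> card (limit_set \<Gamma> x) \<le> 2)"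

definition qc_cocompact :: "real \<Rightarrow> ('a::metric_space \<Rightarrow> 'a) set \<Rightarrow> 'a \<Rightarrow> bool" where
  "qc_cocompact D \<Gamma> x \<longleftrightarrow> (\<forall>y\<in>QC_Hull (limit_set \<Gamma> x). \<forall>y'\<in>QC_Hull (limit_set \<Gamma> x).
       \<exists>g\<in>\<Gamma>. dist (g y) y' \<le> D)"

definition class_M :: "real \<Rightarrow> real \<Rightarrow> 'a::metric_space \<Rightarrow> ('a \<Rightarrow> 'a) set \<Rightarrow> bool" where
  "class_M \<delta> D x \<Gamma> \<longleftrightarrow> proper_space TYPE('a) \<and> geodesic_space TYPE('a) \<and>
     gromov_hyperbolic \<delta> TYPE('a) \<and> isom_subgroup \<Gamma> \<and> discrete_action \<Gamma> \<and>
     torsion_free \<Gamma> \<and> non_elementary \<Gamma> x \<and> qc_cocompact D \<Gamma> x \<and>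
     x \<in> QC_Hull (limit_set \<Gamma> x)"

inductive_set generated_by :: "('a \<Rightarrow> 'a) set \<Rightarrow> ('a \<Rightarrow> 'a) set" for S where
  gen_id: "id \<in> generated_by S"
| gen_left: "s \<in> S \<Longrightarrow> g \<in> generated_by S \<Longrightarrow> s \<circ> g \<in> generated_by S"
| gen_inv: "s \<in> S \<Longrightarrow> g \<in> generated_by S \<Longrightarrow> inv s \<circ> g \<in> generated_by S"

end

theory Submission
  imports Defs "HOL-Library.Diagonal_Subsequence" "HOL-Library.Nat_Bijection"
begin

lemma gprod_commute: "gprod w y z = gprod w z y"
  unfolding gprod_def by (simp add: dist_commute)

lemma gprod_dist: "dist y z = dist w y + dist w z - 2 * gprod w y z"
  unfolding gprod_def by (simp add: field_simps)

lemma gprod_nonneg: "gprod w y z \<ge> 0"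
  unfolding gprod_def using dist_triangle[of y z w] by (simp add: dist_commute)

lemma gprod_le1: "gprod w y z \<le> dist w y"
  unfolding gprod_def using dist_triangle[of w z y] by (simp add: dist_commute)

lemma gprod_le2: "gprod w y z \<le> dist w z"
  unfolding gprod_def using dist_triangle[of w y z] by (simp add: dist_commute)

lemma gprod_base: "gprod w y z \<le> gprod w' y z + dist w w'"
proof -
  have "dist w y \<le> dist w w' + dist w' y" "dist w z \<le> dist w w' + dist w' z"
    by (rule dist_triangle)+
  then show ?thesis unfolding gprod_def by (simp add: field_simps)
qed

lemma gprod_lip1: "gprod w y z \<le> gprod w y' z + dist y y'"
proof -
  have "dist w y \<le> dist w y' + dist y' y" "dist y' z \<le> dist y' y + dist y z"
    by (rule dist_triangle)+
  then show ?thesis unfolding gprod_def by (simp add: field_simps dist_commute)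
qed

lemma gprod_lip2: "gprod w y z \<le> gprod w y z' + dist z z'"
  using gprod_lip1[of w z y z'] by (simp add: gprod_commute)

lemma hypD: "gromov_hyperbolic \<delta> TYPE('a::metric_space) \<Longrightarrow>
   min (gprod w x y) (gprod w y z) - \<delta> \<le> gprod w x (z::'a)"
  unfolding gromov_hyperbolic_def by blast

lemma line_gprod: "geodesic_line \<gamma> \<Longrightarrow> 0 \<le> s \<Longrightarrow> 0 \<le> t \<Longrightarrow>
   gprod (\<gamma> 0) (\<gamma> s) (\<gamma> t) = min s t"
  unfolding gprod_def geodesic_line_def by (simp add: abs_if min_def)

lemma line_reflect: "geodesic_line \<gamma> \<Longrightarrow> geodesic_line (\<lambda>t. \<gamma> (- t))"
  unfolding geodesic_line_def by (simp add: abs_minus_commute)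

definition eq_at :: "'a::metric_space \<Rightarrow> (nat \<Rightarrow> 'a) \<Rightarrow> (nat \<Rightarrow> 'a) \<Rightarrow> bool" where
  "eq_at w u v \<longleftrightarrow> (\<forall>M. \<exists>N. \<forall>n\<ge>N. \<forall>m\<ge>N. gprod w (u n) (v m) \<ge> M)"

lemma eq_at_equiv: assumes "eq_at w u v" shows "gromov_equiv u v"
  unfolding gromov_equiv_def
proof (intro allI)
  fix w' M
  obtain N where N: "\<forall>n\<ge>N. \<forall>m\<ge>N. gprod w (u n) (v m) \<ge> M + dist w w'"
    using assms unfolding eq_at_def by blast
  show "\<exists>N. \<forall>n\<ge>N. \<forall>m\<ge>N. M \<le> gprod w' (u n) (v m)"
  proof (intro exI allI impI)
    fix n m assume "n \<ge> N" "m \<ge> N"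
    then show "M \<le> gprod w' (u n) (v m)" using N gprod_base[of w "u n" "v m" w'] by force
  qed
qed

lemma equiv_sym: "gromov_equiv u v \<Longrightarrow> gromov_equiv v u"
  unfolding gromov_equiv_def by (metis gprod_commute)

lemma equiv_trans:
  assumes hyp: "gromov_hyperbolic \<delta> TYPE('a::metric_space)"
    and uv: "gromov_equiv u v" and vz: "gromov_equiv v (z::nat \<Rightarrow> 'a)"
  shows "gromov_equiv u z"
  unfolding gromov_equiv_def
proof (intro allI)
  fix w M
  obtain N1 where N1: "\<forall>n\<ge>N1. \<forall>m\<ge>N1. gprod w (u n) (v m) \<ge> M + \<delta>"
    using uv unfolding gromov_equiv_def by blast
  obtain N2 where N2: "\<forall>n\<ge>N2. \<forall>m\<ge>N2. gprod w (v n) (z m) \<ge> M + \<delta>"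
    using vz unfolding gromov_equiv_def by blast
  define N where "N = max N1 N2"
  show "\<exists>N. \<forall>n\<ge>N. \<forall>m\<ge>N. M \<le> gprod w (u n) (z m)"
  proof (intro exI allI impI)
    fix n m assume "n \<ge> N" "m \<ge> N"
    then have a: "gprod w (u n) (v N) \<ge> M + \<delta>" "gprod w (v N) (z m) \<ge> M + \<delta>"
      using N1 N2 unfolding N_def by auto
    show "M \<le> gprod w (u n) (z m)" using hypD[OF hyp, of w "u n" "v N" "z m"] a by linarith
  qed
qed

lemma equiv_seq:
  assumes hyp: "gromov_hyperbolic \<delta> TYPE('a::metric_space)"
    and uv: "gromov_equiv u (v::nat \<Rightarrow> 'a)"
  shows "gromov_seq v"
  using equiv_trans[OF hyp equiv_sym[OF uv] uv] unfolding gromov_seq_def gromov_equiv_def .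

lemma equiv_class:
  assumes hyp: "gromov_hyperbolic \<delta> TYPE('a::metric_space)"
    and uv: "gromov_equiv u (v::nat \<Rightarrow> 'a)"
  shows "gromov_class u = gromov_class v"
  unfolding gromov_class_def
  using equiv_trans[OF hyp uv] equiv_trans[OF hyp equiv_sym[OF uv]] by blast

lemma line_seq: assumes "geodesic_line \<gamma>" shows "gromov_seq (\<lambda>n. \<gamma> (real n))"
proof -
  have "eq_at (\<gamma> 0) (\<lambda>n. \<gamma> (real n)) (\<lambda>n. \<gamma> (real n))"
    unfolding eq_at_def
  proof (intro allI)
    fix M :: real
    show "\<exists>N. \<forall>n\<ge>N. \<forall>m\<ge>N. M \<le> gprod (\<gamma> 0) (\<gamma> (real n)) (\<gamma> (real m))"
    proof (intro exI allI impI)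
      fix n m assume "nat \<lceil>M\<rceil> \<le> n" "nat \<lceil>M\<rceil> \<le> m"
      then have "M \<le> real n" "M \<le> real m" by linarith+
      then show "M \<le> gprod (\<gamma> 0) (\<gamma> (real n)) (\<gamma> (real m))"
        using line_gprod[OF assms, of "real n" "real m"] by simp
    qed
  qed
  then show ?thesis using eq_at_equiv unfolding gromov_seq_def gromov_equiv_def by blast
qed

lemma line_mono:
  assumes hyp: "gromov_hyperbolic \<delta> TYPE('a::metric_space)"
    and l: "geodesic_line (\<gamma>::real \<Rightarrow> 'a)" and "0 \<le> t" "t \<le> t'"
  shows "gprod (\<gamma> 0) (\<gamma> t) y \<le> gprod (\<gamma> 0) (\<gamma> t') y + \<delta>"
proof -
  have e: "gprod (\<gamma> 0) (\<gamma> t') (\<gamma> t) = t" using line_gprod[OF l, of t' t] assms by simp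
  have "gprod (\<gamma> 0) (\<gamma> t) y \<le> dist (\<gamma> 0) (\<gamma> t)" by (rule gprod_le1)
  also have "\<dots> = t" using l assms unfolding geodesic_line_def by simp
  finally have "gprod (\<gamma> 0) (\<gamma> t) y \<le> t" .
  then show ?thesis using hypD[OF hyp, of "\<gamma> 0" "\<gamma> t'" "\<gamma> t" y] e by linarith
qed

lemma close_asymptotic:
  assumes hyp: "gromov_hyperbolic \<delta> TYPE('a::metric_space)" and d0: "\<delta> \<ge> 0"
    and l1: "geodesic_line (\<gamma>1::real \<Rightarrow> 'a)" and l2: "geodesic_line \<gamma>2"
    and eq: "gromov_equiv (\<lambda>n. \<gamma>1 (real n)) (\<lambda>n. \<gamma>2 (real n))"
    and eta: "\<eta> > 0"
  shows "\<exists>s t. dist (\<gamma>1 s) (\<gamma>2 t) \<le> 4 * \<delta> + \<eta>"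
proof -
  define w where "w = \<gamma>1 0"
  define \<phi> where "\<phi> n = dist w (\<gamma>2 (real n)) - real n" for n :: nat
  have lb: "\<phi> n \<ge> - dist w (\<gamma>2 0)" for n
  proof -
    have "dist (\<gamma>2 0) (\<gamma>2 (real n)) = real n" using l2 unfolding geodesic_line_def by simp
    moreover have "dist (\<gamma>2 0) (\<gamma>2 (real n)) \<le> dist (\<gamma>2 0) w + dist w (\<gamma>2 (real n))"
      by (rule dist_triangle)
    ultimately show ?thesis unfolding \<phi>_def by (simp add: dist_commute)
  qed
  have mono: "\<phi> m \<le> \<phi> n" if "n \<le> m" for n m
  proof -
    have "dist (\<gamma>2 (real n)) (\<gamma>2 (real m)) = real m - real n"
      using l2 that unfolding geodesic_line_def by simp
    moreover have "dist w (\<gamma>2 (real m)) \<le> dist w (\<gamma>2 (real n)) + dist (\<gamma>2 (real n)) (\<gamma>2 (real m))"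
      by (rule dist_triangle)
    ultimately show ?thesis unfolding \<phi>_def by simp
  qed
  define ell where "ell = Inf (range \<phi>)"
  have bdd: "bdd_below (range \<phi>)" using lb by (intro bdd_belowI2) 
  have "\<exists>T. \<phi> T < ell + \<eta>"
  proof -
    have "\<exists>y\<in>range \<phi>. y < ell + \<eta>" unfolding ell_def
      by (rule cInf_lessD) (use eta in auto)
    then show ?thesis by auto
  qed
  then obtain T where T: "\<phi> T < ell + \<eta>" by blast
  have phil: "\<phi> m \<ge> ell" for m unfolding ell_def using bdd by (simp add: cInf_lower)
  define z where "z = \<gamma>2 (real T)"
  define r where "r = dist w z - \<eta>/2"
  show ?thesis
  proof (cases "r < 0")
    case True
    then have "dist (\<gamma>1 0) (\<gamma>2 (real T)) \<le> 4 * \<delta> + \<eta>" using d0 eta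
      unfolding r_def z_def w_def by simp
    then show ?thesis by blast
  next
    case False
    then have r0: "r \<ge> 0" by simp
    obtain N where N: "\<forall>n\<ge>N. \<forall>m\<ge>N. gprod w (\<gamma>1 (real n)) (\<gamma>2 (real m)) \<ge> dist w z"
      using eq unfolding gromov_equiv_def by blast
    define n where "n = max N (nat \<lceil>r\<rceil>)"
    define m where "m = max N T"
    have nN: "n \<ge> N" and rn: "r \<le> real n" unfolding n_def by linarith+
    have mN: "m \<ge> N" and mT: "T \<le> m" unfolding m_def by auto
    define y where "y = \<gamma>1 r"
    define q where "q = \<gamma>2 (real m)"
    have e1: "gprod w y (\<gamma>1 (real n)) = r"
      unfolding w_def y_def using line_gprod[OF l1, of r "real n"] r0 rn by simp
    have e2: "gprod w (\<gamma>1 (real n)) q \<ge> r"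
      using N nN mN unfolding q_def r_def using eta by force
    have dzq: "dist z q = real m - real T" unfolding z_def q_def
      using l2 mT unfolding geodesic_line_def by simp
    have e3: "gprod w z q \<ge> r"
    proof -
      have "gprod w z q = (dist w z + dist w q - dist z q) / 2" by (simp add: gprod_def)
      also have "\<dots> = dist w z + (\<phi> m - \<phi> T) / 2"
        unfolding \<phi>_def z_def q_def using dzq unfolding z_def q_def by (simp add: field_simps)
      finally show ?thesis using T phil[of m] unfolding r_def by simp
    qed
    have e4: "gprod w y q \<ge> r - \<delta>" using hypD[OF hyp, of w y "\<gamma>1 (real n)" q] e1 e2 by linarith
    have e5: "gprod w y z \<ge> r - 2 * \<delta>"
      using hypD[OF hyp, of w y q z] e4 e3 d0 by (simp add: gprod_commute)
    have dwy: "dist w y = r" unfolding w_def y_def using l1 r0 unfolding geodesic_line_def by simp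
    have "dist y z = dist w y + dist w z - 2 * gprod w y z" by (rule gprod_dist)
    also have "\<dots> \<le> 4 * \<delta> + \<eta>" using dwy e5 eta unfolding r_def by simp
    finally show ?thesis unfolding y_def z_def by blast
  qed
qed

lemma clamp_lip: "\<bar>max 0 (min L a) - max 0 (min L b)\<bar> \<le> \<bar>a - b :: real\<bar>"
  by (simp add: abs_if min_def max_def)

lemma segment_lemma:
  assumes hyp: "gromov_hyperbolic \<delta> TYPE('a::metric_space)"
    and g0: "\<gamma> 0 = p" and gL: "\<gamma> (dist p q) = (q::'a)"
    and "w = (w::'a)" and iso: "\<forall>s\<in>{0..dist p q}. \<forall>t\<in>{0..dist p q}. dist (\<gamma> s) (\<gamma> t) = \<bar>s - t\<bar>"
  defines "L \<equiv> dist p q"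
  defines "s \<equiv> gprod p w q"
  defines "\<sigma> \<equiv> \<lambda>t. \<gamma> (max 0 (min L (s + t)))"
  shows "\<And>t t'. dist (\<sigma> t) (\<sigma> t') \<le> \<bar>t - t'\<bar>"
    and "\<And>t t'. -s \<le> t \<Longrightarrow> t \<le> L - s \<Longrightarrow> -s \<le> t' \<Longrightarrow> t' \<le> L - s \<Longrightarrow>
           dist (\<sigma> t) (\<sigma> t') = \<bar>t - t'\<bar>"
    and "dist w (\<sigma> 0) \<le> gprod w p q + 2 * \<delta>"
    and "\<And>t. -s \<le> t \<Longrightarrow> t \<le> L - s \<Longrightarrow> dist p (\<sigma> t) = s + t"
    and "\<And>t. -s \<le> t \<Longrightarrow> t \<le> L - s \<Longrightarrow> dist (\<sigma> t) q = L - s - t"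
    and "L - s = gprod q w p"
    and "s = dist p w - gprod w p q"
    and "0 \<le> s" and "s \<le> L"
proof -
  have s0: "0 \<le> s" unfolding s_def by (rule gprod_nonneg)
  have sL: "s \<le> L" unfolding s_def L_def by (rule gprod_le2)
  show "0 \<le> s" "s \<le> L" by fact+
  have clampin: "max 0 (min L a) \<in> {0..dist p q}" for a
    using sL s0 unfolding L_def by auto
  show lip: "dist (\<sigma> t) (\<sigma> t') \<le> \<bar>t - t'\<bar>" for t t'
    unfolding \<sigma>_def using iso clampin clamp_lip[of L "s+t" "s+t'"] by auto
  show iso2: "dist (\<sigma> t) (\<sigma> t') = \<bar>t - t'\<bar>"
    if "-s \<le> t" "t \<le> L - s" "-s \<le> t'" "t' \<le> L - s" for t t'
  proof -
    have "max 0 (min L (s + t)) = s + t" "max 0 (min L (s + t')) = s + t'" using that by auto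
    then show ?thesis unfolding \<sigma>_def using iso clampin[of "s+t"] clampin[of "s+t'"] by auto
  qed
  show dp: "dist p (\<sigma> t) = s + t" if "-s \<le> t" "t \<le> L - s" for t
  proof -
    have "\<sigma> (-s) = p" unfolding \<sigma>_def using g0 by simp
    then show ?thesis using iso2[of "-s" t] that s0 sL by auto
  qed
  show dq: "dist (\<sigma> t) q = L - s - t" if "-s \<le> t" "t \<le> L - s" for t
  proof -
    have "\<sigma> (L - s) = q" unfolding \<sigma>_def using gL s0 sL unfolding L_def by simp
    then show ?thesis using iso2[of t "L - s"] that s0 sL by auto
  qed
  show id1: "L - s = gprod q w p" unfolding L_def s_def gprod_def by (simp add: dist_commute field_simps)
  show id2: "s = dist p w - gprod w p q" unfolding s_def gprod_def by (simp add: dist_commute field_simps)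
  define z where "z = \<sigma> 0"
  have dpz: "dist p z = s" unfolding z_def using dp[of 0] s0 sL by simp
  have dzq: "dist z q = L - s" unfolding z_def using dq[of 0] s0 sL by simp
  have a1: "gprod p z q = s" unfolding gprod_def using dpz dzq unfolding L_def by simp
  have a2: "gprod p q w = s" unfolding s_def by (rule gprod_commute)
  have "gprod p z w \<ge> s - \<delta>" using hypD[OF hyp, of p z q w] a1 a2 by simp
  then have "dist z w \<le> dist p w - s + 2 * \<delta>" using gprod_dist[of z w p] dpz by simp
  then show "dist w (\<sigma> 0) \<le> gprod w p q + 2 * \<delta>" using id2 unfolding z_def by (simp add: dist_commute)
qed

lemma interp_line:
  fixes f :: "int \<Rightarrow> 'a::metric_space" and g :: "int \<Rightarrow> real \<Rightarrow> 'a"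
  assumes fd: "\<And>j k. dist (f j) (f k) = \<bar>real_of_int j - real_of_int k\<bar>"
    and g0: "\<And>k. g k 0 = f k" and g1: "\<And>k. g k 1 = f (k+1)"
    and gi: "\<And>k s t. s \<in> {0..1} \<Longrightarrow> t \<in> {0..1} \<Longrightarrow> dist (g k s) (g k t) = \<bar>s - t\<bar>"
  defines "F \<equiv> \<lambda>t. g \<lfloor>t\<rfloor> (t - of_int \<lfloor>t\<rfloor>)"
  shows "geodesic_line F" and "\<And>k. F (of_int k) = f k"
proof -
  show "F (of_int k) = f k" for k unfolding F_def using g0 by simp
  have main: "dist (F s) (F t) = t - s" if st: "s \<le> t" for s t
  proof -
    define j where "j = \<lfloor>s\<rfloor>"
    define k where "k = \<lfloor>t\<rfloor>"
    define a where "a = s - of_int j"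
    define b where "b = t - of_int k"
    have a01: "a \<in> {0..1}" "a < 1" unfolding a_def j_def by (auto, linarith+)
    have b01: "b \<in> {0..1}" "b < 1" unfolding b_def k_def by (auto, linarith+)
    have jk: "j \<le> k" unfolding j_def k_def using st by (simp add: floor_mono)
    have Fs: "F s = g j a" unfolding F_def j_def a_def by simp
    have Ft: "F t = g k b" unfolding F_def k_def b_def by simp
    show ?thesis
    proof (cases "j = k")
      case True
      then show ?thesis using gi[OF a01(1) b01(1), of k] Fs Ft a_def b_def st by simp
    next
      case False
      then have jk': "j + 1 \<le> k" using jk by simp
      have d1: "dist (g j a) (f (j+1)) = 1 - a" using gi[OF a01(1), of 1 j] g1 a01 by simp
      have d2: "dist (f (j+1)) (f k) = of_int k - of_int j - 1" using fd[of "j+1" k] jk' by simp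
      have d3: "dist (f k) (g k b) = b" using gi[of 0 b k] g0 b01 by simp
      have "dist (F s) (F t) \<le> dist (g j a) (f (j+1)) + dist (f (j+1)) (f k) + dist (f k) (g k b)"
        using Fs Ft dist_triangle[of "g j a" "g k b" "f k"] dist_triangle[of "g j a" "f k" "f (j+1)"] by simp
      then have up: "dist (F s) (F t) \<le> t - s" using d1 d2 d3 a_def b_def by simp
      have e1: "dist (f j) (g j a) = a" using gi[of 0 a j] g0 a01 by simp
      have e2: "dist (g k b) (f (k+1)) = 1 - b" using gi[OF b01(1), of 1 k] g1 b01 by simp
      have e3: "dist (f j) (f (k+1)) = of_int k + 1 - of_int j" using fd[of j "k+1"] jk by simp
      have "dist (f j) (f (k+1)) \<le> dist (f j) (g j a) + dist (g j a) (g k b) + dist (g k b) (f (k+1))"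
        using dist_triangle[of "f j" "f (k+1)" "g k b"] dist_triangle[of "f j" "g k b" "g j a"] by simp
      then have "dist (F s) (F t) \<ge> t - s" using e1 e2 e3 Fs Ft a_def b_def by simp
      with up show ?thesis by simp
    qed
  qed
  show "geodesic_line F" unfolding geodesic_line_def
  proof (intro allI)
    fix s t
    show "dist (F s) (F t) = \<bar>s - t\<bar>"
    proof (cases "s \<le> t")
      case True then show ?thesis using main by simp
    next
      case False then show ?thesis using main[of t s] by (simp add: dist_commute)
    qed
  qed
qed

lemma gprod_id3: "gprod q w p = dist q w - gprod w p q"
  unfolding gprod_def by (simp add: dist_commute field_simps)

lemma line_exists:
  assumes hyp: "gromov_hyperbolic \<delta> TYPE('a::metric_space)" and d0: "\<delta> \<ge> 0"
    and proper: "proper_space TYPE('a)" and geod: "geodesic_space TYPE('a)"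
    and la: "geodesic_line (\<alpha>::real \<Rightarrow> 'a)" and lb: "geodesic_line \<beta>"
    and ne: "\<not> gromov_equiv (\<lambda>n. \<alpha> (real n)) (\<lambda>n. \<beta> (real n))"
  shows "\<exists>F. geodesic_line F \<and> gromov_equiv (\<lambda>n. \<alpha> (real n)) (\<lambda>n. F (- real n)) \<and>
             gromov_equiv (\<lambda>n. F (real n)) (\<lambda>n. \<beta> (real n))"
proof -
  define w where "w = \<alpha> 0"
  define c0 where "c0 = dist w (\<beta> 0)"
  have da: "dist w (\<alpha> t) = \<bar>t\<bar>" for t using la unfolding w_def geodesic_line_def by simp
  have db: "dist (\<beta> 0) (\<beta> t) = \<bar>t\<bar>" for t using lb unfolding geodesic_line_def by simp
  have c00: "c0 \<ge> 0" unfolding c0_def by simp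
  obtain w' M where wM: "\<forall>N. \<exists>n\<ge>N. \<exists>m\<ge>N. gprod w' (\<alpha> (real n)) (\<beta> (real m)) < M"
    using ne unfolding gromov_equiv_def by (meson not_le)
  define C1 where "C1 = M + 2 * \<delta> + 2 * c0 + dist w w'"
  have C1: "gprod w (\<alpha> (real n)) (\<beta> (real n)) \<le> C1" for n
  proof -
    obtain n' m' where nm: "n' \<ge> n" "m' \<ge> n" "gprod w' (\<alpha> (real n')) (\<beta> (real m')) < M"
      using wM by blast
    have g1: "gprod w (\<alpha> (real n)) (\<beta> (real n)) \<le> gprod w (\<alpha> (real n')) (\<beta> (real n)) + \<delta>"
      using line_mono[OF hyp la, of "real n" "real n'" "\<beta> (real n)"] nm unfolding w_def by simp
    have g2: "gprod w (\<alpha> (real n')) (\<beta> (real n)) \<le> gprod (\<beta> 0) (\<beta> (real n)) (\<alpha> (real n')) + c0"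
      using gprod_base[of w "\<alpha> (real n')" "\<beta> (real n)" "\<beta> 0"] unfolding c0_def by (simp add: gprod_commute)
    have g3: "gprod (\<beta> 0) (\<beta> (real n)) (\<alpha> (real n')) \<le> gprod (\<beta> 0) (\<beta> (real m')) (\<alpha> (real n')) + \<delta>"
      using line_mono[OF hyp lb, of "real n" "real m'" "\<alpha> (real n')"] nm by simp
    have g4: "gprod (\<beta> 0) (\<beta> (real m')) (\<alpha> (real n')) \<le> gprod w (\<alpha> (real n')) (\<beta> (real m')) + c0"
      using gprod_base[of "\<beta> 0" "\<beta> (real m')" "\<alpha> (real n')" w] unfolding c0_def
      by (simp add: gprod_commute dist_commute)
    have g5: "gprod w (\<alpha> (real n')) (\<beta> (real m')) \<le> gprod w' (\<alpha> (real n')) (\<beta> (real m')) + dist w w'"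
      by (rule gprod_base)
    show ?thesis using g1 g2 g3 g4 g5 nm(3) unfolding C1_def by linarith
  qed
  have C10: "C1 \<ge> 0" using C1[of 0] gprod_nonneg[of w "\<alpha> 0" "\<beta> 0"] by simp
  define p where "p n = \<alpha> (real n)" for n :: nat
  define q where "q n = \<beta> (real n)" for n :: nat
  have "\<forall>n. \<exists>\<gamma>::real \<Rightarrow> 'a. \<gamma> 0 = p n \<and> \<gamma> (dist (p n) (q n)) = q n \<and>
      (\<forall>s\<in>{0..dist (p n) (q n)}. \<forall>t\<in>{0..dist (p n) (q n)}. dist (\<gamma> s) (\<gamma> t) = \<bar>s - t\<bar>)"
    using geod unfolding geodesic_space_def by blast
  then obtain seg where seg: "\<And>n. seg n 0 = p n" "\<And>n. seg n (dist (p n) (q n)) = q n"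
    "\<And>n. \<forall>s\<in>{0..dist (p n) (q n)}. \<forall>t\<in>{0..dist (p n) (q n)}. dist (seg n s) (seg n t) = \<bar>s - t\<bar>"
    by metis
  define L where "L n = dist (p n) (q n)" for n
  define s where "s n = gprod (p n) w (q n)" for n
  define \<sigma> where "\<sigma> n t = seg n (max 0 (min (L n) (s n + t)))" for n t
  note SLr = segment_lemma[OF hyp seg(1) seg(2) refl seg(3), where w=w]
  have SL1: "dist (\<sigma> n t) (\<sigma> n t') \<le> \<bar>t - t'\<bar>" for n t t'
    using SLr(1) unfolding \<sigma>_def L_def s_def by simp
  have SL2: "dist (\<sigma> n t) (\<sigma> n t') = \<bar>t - t'\<bar>"
    if "-s n \<le> t" "t \<le> L n - s n" "-s n \<le> t'" "t' \<le> L n - s n" for n t t'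
    using SLr(2) that unfolding \<sigma>_def L_def s_def by simp
  have SL3: "dist w (\<sigma> n 0) \<le> gprod w (p n) (q n) + 2 * \<delta>" for n
    using SLr(3) unfolding \<sigma>_def L_def s_def by simp
  have SL4: "dist (p n) (\<sigma> n t) = s n + t" if "-s n \<le> t" "t \<le> L n - s n" for n t
    using SLr(4) that unfolding \<sigma>_def L_def s_def by simp
  have SL5: "dist (\<sigma> n t) (q n) = L n - s n - t" if "-s n \<le> t" "t \<le> L n - s n" for n t
    using SLr(5) that unfolding \<sigma>_def L_def s_def by simp
  have SL6: "L n - s n = gprod (q n) w (p n)" for n
    using SLr(6) unfolding L_def s_def by simp
  have SL7: "s n = dist (p n) w - gprod w (p n) (q n)" for n
    using SLr(7) unfolding s_def by simp
  define C where "C = C1 + 2 * \<delta>"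
  have C0: "C \<ge> 0" unfolding C_def using C10 d0 by simp
  have z: "dist w (\<sigma> n 0) \<le> C" for n
    using SL3[of n] C1[of n] unfolding C_def p_def q_def by simp
  have bd: "dist w (\<sigma> n t) \<le> C + \<bar>t\<bar>" for n t
    using z[of n] SL1[of n 0 t] dist_triangle[of w "\<sigma> n t" "\<sigma> n 0"] by (simp add: dist_commute)
  have dpw: "dist (p n) w = real n" for n using da[of "real n"] unfolding p_def by (simp add: dist_commute)
  have dqw: "dist (q n) w \<ge> real n - c0" for n
    using db[of "real n"] dist_triangle[of "\<beta> 0" "q n" w] unfolding q_def c0_def by (simp add: dist_commute)
  have slow: "s n \<ge> real n - C1" for n using SL7[of n] dpw[of n] C1[of n] unfolding p_def q_def by simp
  have shigh: "s n \<le> real n" for n using SL7[of n] dpw[of n] gprod_nonneg[of w "p n" "q n"] by simp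
  have Lslow: "L n - s n \<ge> real n - c0 - C1" for n
    using SL6[of n] gprod_id3[of "q n" w "p n"] dqw[of n] C1[of n] unfolding p_def q_def by simp
  have inrange: "- s n \<le> t \<and> t \<le> L n - s n" if "real n \<ge> \<bar>t\<bar> + C1 + c0" for n t
    using slow[of n] Lslow[of n] that C10 c00 by linarith
  define P where "P k r \<longleftrightarrow> convergent (\<lambda>i. \<sigma> (r i) (real_of_int (int_decode k)))" for k r
  interpret subseqs P
  proof
    fix k and sq :: "nat \<Rightarrow> nat" assume "strict_mono sq"
    define j where "j = real_of_int (int_decode k)"
    have "compact (cball w (C + \<bar>j\<bar>))" using proper unfolding proper_space_def by blast
    moreover have "\<forall>i. \<sigma> (sq i) j \<in> cball w (C + \<bar>j\<bar>)" using bd by simp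
    ultimately obtain l r where "strict_mono r" "((\<lambda>i. \<sigma> (sq i) j) \<circ> r) \<longlonglongrightarrow> l"
      unfolding compact_eq_seq_compact_metric seq_compact_def by meson
    then show "\<exists>r'. strict_mono r' \<and> P k (sq \<circ> r')"
      unfolding P_def j_def by (auto simp: convergent_def o_def)
  qed
  define r where "r = diagseq"
  have rmono: "strict_mono r" unfolding r_def by (rule subseq_diagseq)
  have rge: "i \<le> r i" for i using seq_suble[OF rmono] .
  have conv: "convergent (\<lambda>i. \<sigma> (r i) (real_of_int j))" for j
  proof -
    have "P (int_encode j) (diagseq \<circ> (+) (Suc (int_encode j)))"
      by (rule diagseq_holds) (auto simp: P_def o_def intro: convergent_subseq_convergent[unfolded o_def])
    then have "convergent (\<lambda>i. \<sigma> (r (i + Suc (int_encode j))) (real_of_int j))"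
      unfolding P_def r_def by (simp add: o_def add.commute)
    then show ?thesis
      using convergent_ignore_initial_segment[of "\<lambda>i. \<sigma> (r i) (real_of_int j)" "Suc (int_encode j)"]
      by simp
  qed
  define f where "f j = lim (\<lambda>i. \<sigma> (r i) (real_of_int j))" for j
  have lim: "(\<lambda>i. \<sigma> (r i) (real_of_int j)) \<longlonglongrightarrow> f j" for j
    using conv[of j] unfolding f_def by (simp add: convergent_LIMSEQ_iff)
  have fd: "dist (f j) (f k) = \<bar>real_of_int j - real_of_int k\<bar>" for j k
  proof -
    define I where "I = nat \<lceil>\<bar>real_of_int j\<bar> + \<bar>real_of_int k\<bar> + C1 + c0\<rceil>"
    have ev: "eventually (\<lambda>i. dist (\<sigma> (r i) (real_of_int j)) (\<sigma> (r i) (real_of_int k))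
                 = \<bar>real_of_int j - real_of_int k\<bar>) sequentially"
    proof (rule eventually_sequentiallyI[of I])
      fix i assume "I \<le> i"
      then have "real (r i) \<ge> \<bar>real_of_int j\<bar> + \<bar>real_of_int k\<bar> + C1 + c0"
        using rge[of i] unfolding I_def by linarith
      then have "real (r i) \<ge> \<bar>real_of_int j\<bar> + C1 + c0" "real (r i) \<ge> \<bar>real_of_int k\<bar> + C1 + c0"
        by linarith+
      then show "dist (\<sigma> (r i) (real_of_int j)) (\<sigma> (r i) (real_of_int k))
                 = \<bar>real_of_int j - real_of_int k\<bar>"
        using inrange SL2 by blast
    qed
    have "(\<lambda>i. dist (\<sigma> (r i) (real_of_int j)) (\<sigma> (r i) (real_of_int k))) \<longlonglongrightarrow> dist (f j) (f k)"
      using tendsto_dist[OF lim lim] .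
    then have "(\<lambda>i. \<bar>real_of_int j - real_of_int k\<bar>) \<longlonglongrightarrow> dist (f j) (f k)"
      by (rule Lim_transform_eventually[OF _ ev])
    from LIMSEQ_unique[OF this tendsto_const] show ?thesis by simp
  qed
  have "\<forall>k. \<exists>\<gamma>::real \<Rightarrow> 'a. \<gamma> 0 = f k \<and> \<gamma> (dist (f k) (f (k+1))) = f (k+1) \<and>
      (\<forall>s\<in>{0..dist (f k) (f (k+1))}. \<forall>t\<in>{0..dist (f k) (f (k+1))}. dist (\<gamma> s) (\<gamma> t) = \<bar>s - t\<bar>)"
    using geod unfolding geodesic_space_def by blast
  moreover have "dist (f k) (f (k+1)) = 1" for k using fd[of k "k+1"] by simp
  ultimately obtain g where g0: "\<And>k. g k 0 = f k" and g1: "\<And>k. g k 1 = f (k+1)"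
    and gi: "\<And>k. \<forall>s\<in>{0..1}. \<forall>t\<in>{0..1}. dist (g k s) (g k t) = \<bar>s - t\<bar>"
    by metis
  define F where "F = (\<lambda>t. g \<lfloor>t\<rfloor> (t - of_int \<lfloor>t\<rfloor>))"
  have FL: "geodesic_line F" and Fk: "\<And>k. F (of_int k) = f k"
    using interp_line[of f g, OF fd g0 g1] gi unfolding F_def by blast+
  have getK: "\<exists>K. dist (\<sigma> K t) (f (int_t)) < 1 \<and> real K \<ge> B"
    if "t = real_of_int int_t" for t int_t B
  proof -
    have e1: "eventually (\<lambda>i. dist (\<sigma> (r i) t) (f int_t) < 1) sequentially"
      using lim[of int_t] that unfolding tendsto_iff by simp
    have e2: "eventually (\<lambda>i. real (r i) \<ge> B) sequentially"
    proof (rule eventually_sequentiallyI[of "nat \<lceil>B\<rceil>"])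
      fix i assume "nat \<lceil>B\<rceil> \<le> i" then show "B \<le> real (r i)" using rge[of i] by linarith
    qed
    obtain i where "dist (\<sigma> (r i) t) (f int_t) < 1 \<and> real (r i) \<ge> B"
      using eventually_happens'[OF _ eventually_conj[OF e1 e2]] by auto
    then show ?thesis by blast
  qed
  have E1: "eq_at w (\<lambda>n. \<alpha> (real n)) (\<lambda>n. F (- real n))"
    unfolding eq_at_def
  proof (intro allI)
    fix M :: real
    define N where "N = nat \<lceil>M + C + c0 + \<delta> + 1\<rceil>"
    show "\<exists>N. \<forall>a\<ge>N. \<forall>b\<ge>N. M \<le> gprod w (\<alpha> (real a)) (F (- real b))"
    proof (intro exI allI impI)
      fix a b assume aN: "N \<le> a" and bN: "N \<le> b"
      have aM: "real a \<ge> M + C + c0 + \<delta> + 1" and bM: "real b \<ge> M + C + c0 + \<delta> + 1"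
        using aN bN unfolding N_def by linarith+
      have Fb: "F (- real b) = f (- int b)" using Fk[of "- int b"] by simp
      obtain K where K: "dist (\<sigma> K (- real b)) (f (- int b)) < 1"
        "real K \<ge> real a + real b + C1 + c0"
        using getK[of "- real b" "- int b" "real a + real b + C1 + c0"] by auto
      have ir: "- s K \<le> - real b \<and> - real b \<le> L K - s K" using inrange[of "- real b" K] K(2) by simp
      have ir0: "- s K \<le> 0 \<and> 0 \<le> L K - s K" using inrange[of 0 K] K(2) C10 c00 by simp
      define y where "y = \<sigma> K (- real b)"
      have dpy: "dist (p K) y = s K - real b" using SL4[of K "- real b"] ir unfolding y_def by simp
      have dzy: "dist (\<sigma> K 0) y = real b" using SL2[of K 0 "- real b"] ir ir0 unfolding y_def by simp
      have dwy: "dist w y \<ge> real b - C"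
        using dzy z[of K] dist_triangle[of "\<sigma> K 0" y w] by (simp add: dist_commute)
      have dwp: "dist w (p K) = real K" unfolding p_def using da by simp
      have g1: "gprod w (p K) y \<ge> real b - C / 2"
        using dpy dwy dwp shigh[of K] unfolding gprod_def by simp
      have g2: "gprod w (\<alpha> (real a)) (p K) = real a"
        using line_gprod[OF la, of "real a" "real K"] K(2) C10 c00 unfolding w_def p_def by simp
      have g3: "gprod w (\<alpha> (real a)) y \<ge> min (real a) (real b - C / 2) - \<delta>"
        using hypD[OF hyp, of w "\<alpha> (real a)" "p K" y] g1 g2 by simp
      have g4: "gprod w (\<alpha> (real a)) y \<le> gprod w (\<alpha> (real a)) (F (- real b)) + 1"
        using gprod_lip2[of w "\<alpha> (real a)" y "F (- real b)"] K(1) Fb unfolding y_def by simp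
      show "M \<le> gprod w (\<alpha> (real a)) (F (- real b))"
        using g3 g4 aM bM C0 c00 by linarith
    qed
  qed
  have E2: "eq_at w (\<lambda>n. F (real n)) (\<lambda>n. \<beta> (real n))"
    unfolding eq_at_def
  proof (intro allI)
    fix M :: real
    define N where "N = nat \<lceil>M + C + c0 + \<delta> + 1\<rceil>"
    show "\<exists>N. \<forall>b\<ge>N. \<forall>a\<ge>N. M \<le> gprod w (F (real b)) (\<beta> (real a))"
    proof (intro exI allI impI)
      fix a b assume bN: "N \<le> b" and aN: "N \<le> a"
      have aM: "real a \<ge> M + C + c0 + \<delta> + 1" and bM: "real b \<ge> M + C + c0 + \<delta> + 1"
        using aN bN unfolding N_def by linarith+
      have Fb: "F (real b) = f (int b)" using Fk[of "int b"] by simp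
      obtain K where K: "dist (\<sigma> K (real b)) (f (int b)) < 1"
        "real K \<ge> real a + real b + C1 + c0"
        using getK[of "real b" "int b" "real a + real b + C1 + c0"] by auto
      have ir: "- s K \<le> real b \<and> real b \<le> L K - s K" using inrange[of "real b" K] K(2) by simp
      have ir0: "- s K \<le> 0 \<and> 0 \<le> L K - s K" using inrange[of 0 K] K(2) C10 c00 by simp
      define y where "y = \<sigma> K (real b)"
      have dyq: "dist y (q K) = L K - s K - real b" using SL5[of K "real b"] ir unfolding y_def by simp
      have dzy: "dist (\<sigma> K 0) y = real b" using SL2[of K 0 "real b"] ir ir0 unfolding y_def by simp
      have dwy: "dist w y \<ge> real b - C"
        using dzy z[of K] dist_triangle[of "\<sigma> K 0" y w] by (simp add: dist_commute)
      have dwq: "dist w (q K) - (L K - s K) \<ge> 0"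
        using SL6[of K] gprod_id3[of "q K" w "p K"] gprod_nonneg[of w "p K" "q K"]
        by (simp add: dist_commute)
      have g1: "gprod w y (q K) \<ge> real b - C / 2"
        using dyq dwy dwq unfolding gprod_def by simp
      have g2': "gprod (\<beta> 0) (q K) (\<beta> (real a)) = real a"
        using line_gprod[OF lb, of "real K" "real a"] K(2) C10 c00 unfolding q_def by simp
      have g2: "gprod w (q K) (\<beta> (real a)) \<ge> real a - c0"
        using gprod_base[of "\<beta> 0" "q K" "\<beta> (real a)" w] g2' unfolding c0_def
        by (simp add: dist_commute)
      have g3: "gprod w y (\<beta> (real a)) \<ge> min (real b - C / 2) (real a - c0) - \<delta>"
        using hypD[OF hyp, of w y "q K" "\<beta> (real a)"] g1 g2 by simp
      have g4: "gprod w y (\<beta> (real a)) \<le> gprod w (F (real b)) (\<beta> (real a)) + 1"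
        using gprod_lip1[of w y "\<beta> (real a)" "F (real b)"] K(1) Fb unfolding y_def by simp
      show "M \<le> gprod w (F (real b)) (\<beta> (real a))"
        using g3 g4 aM bM C0 c00 by linarith
    qed
  qed
  show ?thesis using FL eq_at_equiv[OF E1] eq_at_equiv[OF E2] by blast
qed

lemma gen_sub:
  assumes "isom_subgroup \<Gamma>" "S \<subseteq> \<Gamma>" shows "generated_by S \<subseteq> \<Gamma>"
proof
  fix g assume "g \<in> generated_by S"
  then show "g \<in> \<Gamma>"
  proof induction
    case gen_id then show ?case using assms(1) unfolding isom_subgroup_def by blast
  next
    case (gen_left s g) then show ?case using assms unfolding isom_subgroup_def by blast
  next
    case (gen_inv s g) then show ?case using assms unfolding isom_subgroup_def by blast
  qed
qed

lemma gen_comp: "g \<in> generated_by S \<Longrightarrow> h \<in> generated_by S \<Longrightarrow> g \<circ> h \<in> generated_by S"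
proof (induction g rule: generated_by.induct)
  case gen_id then show ?case by simp
next
  case (gen_left s g) then show ?case using generated_by.gen_left[of s S "g \<circ> h"] by (metis comp_assoc)
next
  case (gen_inv s g) then show ?case using generated_by.gen_inv[of s S "g \<circ> h"] by (metis comp_assoc)
qed

lemma gen_base: "s \<in> S \<Longrightarrow> s \<in> generated_by S"
  using generated_by.gen_left[OF _ generated_by.gen_id] by fastforce

lemma iso_gprod: "isometry g \<Longrightarrow> gprod (g w) (g a) (g b) = gprod w a b"
  unfolding isometry_def gprod_def by simp

lemma equiv_iso:
  assumes g: "isometry g" and e: "gromov_equiv u v"
  shows "gromov_equiv (\<lambda>n. g (u n)) (\<lambda>n. g (v n))"
  unfolding gromov_equiv_def
proof (intro allI)
  fix w M
  have w: "g (inv g w) = w" using g unfolding isometry_def by (simp add: bij_is_surj surj_f_inv_f)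
  obtain N where "\<forall>n\<ge>N. \<forall>m\<ge>N. gprod (inv g w) (u n) (v m) \<ge> M" using e unfolding gromov_equiv_def by blast
  then show "\<exists>N. \<forall>n\<ge>N. \<forall>m\<ge>N. M \<le> gprod w (g (u n)) (g (v m))"
    using iso_gprod[OF g, of "inv g w"] w by metis
qed

lemma limit_inv:
  assumes G: "isom_subgroup \<Gamma>" and g: "g \<in> \<Gamma>" and su: "gromov_seq u"
    and l: "gromov_class u \<in> limit_set \<Gamma> x"
  shows "gromov_class (\<lambda>n. g (u n)) \<in> limit_set \<Gamma> x"
proof -
  have gi: "isometry g" using G g unfolding isom_subgroup_def by blast
  obtain v where v: "\<forall>n. v n \<in> (\<lambda>h. h x) ` \<Gamma>" "v \<in> gromov_class u"
    using l unfolding limit_set_def by blast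
  have sv: "gromov_seq v" and uv: "gromov_equiv u v" using v(2) unfolding gromov_class_def by auto
  have s1: "gromov_seq (\<lambda>n. g (u n))" using equiv_iso[OF gi su[unfolded gromov_seq_def[folded gromov_equiv_def]]]
    unfolding gromov_seq_def gromov_equiv_def .
  have s2: "gromov_seq (\<lambda>n. g (v n))" using equiv_iso[OF gi sv[unfolded gromov_seq_def[folded gromov_equiv_def]]]
    unfolding gromov_seq_def gromov_equiv_def .
  have "(\<lambda>n. g (v n)) \<in> gromov_class (\<lambda>n. g (u n))"
    unfolding gromov_class_def using s2 equiv_iso[OF gi uv] by simp
  moreover have "\<forall>n. g (v n) \<in> (\<lambda>h. h x) ` \<Gamma>"
  proof
    fix n obtain h where "h \<in> \<Gamma>" "v n = h x" using v(1) by blast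
    then show "g (v n) \<in> (\<lambda>h. h x) ` \<Gamma>" using G g unfolding isom_subgroup_def
      by (auto intro!: image_eqI[of _ _ "g \<circ> h"])
  qed
  moreover have "gromov_class (\<lambda>n. g (u n)) \<in> gromov_boundary" using s1 unfolding gromov_boundary_def by blast
  ultimately show ?thesis unfolding limit_set_def
    by (intro CollectI conjI exI[where x="\<lambda>n. g (v n)"]) auto
qed

definition HL :: "(nat \<Rightarrow> 'a::metric_space) set set \<Rightarrow> (real \<Rightarrow> 'a) \<Rightarrow> bool" where
  "HL C \<gamma> \<longleftrightarrow> geodesic_line \<gamma> \<and> gromov_class (\<lambda>n. \<gamma> (real n)) \<in> C \<and> gromov_class (\<lambda>n. \<gamma> (- real n)) \<in> C"

lemma hull_iff: "y \<in> QC_Hull C \<longleftrightarrow> (\<exists>\<gamma>. HL C \<gamma> \<and> y \<in> range \<gamma>)"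
  unfolding QC_Hull_def HL_def by blast

lemma HL_inv:
  assumes G: "isom_subgroup \<Gamma>" and g: "g \<in> \<Gamma>" and h: "HL (limit_set \<Gamma> x) \<gamma>"
  shows "HL (limit_set \<Gamma> x) (g \<circ> \<gamma>)"
proof -
  have gi: "isometry g" using G g unfolding isom_subgroup_def by blast
  have l: "geodesic_line \<gamma>" using h unfolding HL_def by blast
  have "geodesic_line (g \<circ> \<gamma>)" using l gi unfolding geodesic_line_def isometry_def by simp
  moreover have "gromov_class (\<lambda>n. g (\<gamma> (real n))) \<in> limit_set \<Gamma> x"
    using limit_inv[OF G g line_seq[OF l]] h unfolding HL_def by blast
  moreover have "gromov_class (\<lambda>n. g (\<gamma> (- real n))) \<in> limit_set \<Gamma> x"
    using limit_inv[OF G g line_seq[OF line_reflect[OF l]]] h unfolding HL_def by blast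
  ultimately show ?thesis unfolding HL_def by (simp add: o_def)
qed

lemma gap_lemma:
  fixes v :: "'b \<Rightarrow> real"
  assumes "finite F0"
  shows "\<exists>\<epsilon>>0. \<epsilon> \<le> 1 \<and> (\<forall>k\<in>F0. v k \<le> R0 + \<epsilon> \<longrightarrow> v k \<le> R0)"
proof -
  define A where "A = (\<lambda>k. v k - R0) ` {k\<in>F0. v k > R0}"
  have fA: "finite A" using assms unfolding A_def by simp
  define \<epsilon> where "\<epsilon> = Min (insert 1 A) / 2"
  have pos: "Min (insert 1 A) > 0" using fA unfolding A_def by (subst Min_gr_iff) auto
  have le1: "Min (insert 1 A) \<le> 1" using fA by simp
  show ?thesis
  proof (intro exI conjI ballI impI)
    show "\<epsilon> > 0" "\<epsilon> \<le> 1" unfolding \<epsilon>_def using pos le1 by auto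
    fix k assume k: "k \<in> F0" "v k \<le> R0 + \<epsilon>"
    show "v k \<le> R0"
    proof (rule ccontr)
      assume "\<not> v k \<le> R0"
      then have "v k - R0 \<in> A" unfolding A_def using k by auto
      then have "Min (insert 1 A) \<le> v k - R0" using fA by simp
      then show False using k pos unfolding \<epsilon>_def by simp
    qed
  qed
qed

theorem mainTheorem11:
  fixes \<delta> D :: real and x :: "'a::metric_space" and \<Gamma> :: "('a \<Rightarrow> 'a) set"
  assumes "\<delta> \<ge> 0" and "D \<ge> 0"
    and "class_M \<delta> D x \<Gamma>"
  shows "generated_by {g\<in>\<Gamma>. dist x (g x) \<le> 2 * D + 72 * \<delta>} = \<Gamma>"
proof -
  note d0 = assms(1) and D0 = assms(2)
  have proper: "proper_space TYPE('a)" and geod: "geodesic_space TYPE('a)"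
    and hyp: "gromov_hyperbolic \<delta> TYPE('a)" and G: "isom_subgroup \<Gamma>"
    and disc: "discrete_action \<Gamma>" and cc: "qc_cocompact D \<Gamma> x"
    and xh: "x \<in> QC_Hull (limit_set \<Gamma> x)"
    using assms(3) unfolding class_M_def by auto
  define \<Lambda> where "\<Lambda> = limit_set \<Gamma> x"
  define R0 where "R0 = 2 * D + 72 * \<delta>"
  define S where "S = {g\<in>\<Gamma>. dist x (g x) \<le> R0}"
  define H where "H = generated_by S"
  have SG: "S \<subseteq> \<Gamma>" unfolding S_def by auto
  have HG: "H \<subseteq> \<Gamma>" unfolding H_def by (rule gen_sub[OF G SG])
  have Giso: "\<And>g. g \<in> \<Gamma> \<Longrightarrow> isometry g" and Ginv: "\<And>g. g \<in> \<Gamma> \<Longrightarrow> inv g \<in> \<Gamma>"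
    and Gcomp: "\<And>g h. g \<in> \<Gamma> \<Longrightarrow> h \<in> \<Gamma> \<Longrightarrow> g \<circ> h \<in> \<Gamma>"
    using G unfolding isom_subgroup_def by auto
  have finv: "h (inv h y) = y" if "h \<in> \<Gamma>" for h y
    using Giso[OF that] unfolding isometry_def by (simp add: bij_is_surj surj_f_inv_f)
  have hinv: "h \<circ> (inv h \<circ> g) = g" if "h \<in> \<Gamma>" for h g
    using finv[OF that] by (simp add: fun_eq_iff)
  have dinv: "dist x ((inv h \<circ> g) x) = dist (h x) (g x)" if "h \<in> \<Gamma>" for h g
  proof -
    have "dist (h x) (g x) = dist (h x) (h (inv h (g x)))" using finv[OF that] by simp
    also have "\<dots> = dist x (inv h (g x))" using Giso[OF that] unfolding isometry_def by simp
    finally show ?thesis by simp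
  qed
  \<comment> \<open>gap from discreteness\<close>
  have "finite {g\<in>\<Gamma>. dist x (g x) \<le> R0 + 1}" using disc unfolding discrete_action_def by blast
  from gap_lemma[OF this, of "\<lambda>k. dist x (k x)" R0] obtain \<epsilon> where e0: "\<epsilon> > 0" and e1: "\<epsilon> \<le> 1"
    and gapb: "\<forall>k\<in>{g\<in>\<Gamma>. dist x (g x) \<le> R0 + 1}. dist x (k x) \<le> R0 + \<epsilon> \<longrightarrow> dist x (k x) \<le> R0"
    by blast
  have gap: "dist x (k x) \<le> R0" if "k \<in> {g\<in>\<Gamma>. dist x (g x) \<le> R0 + 1}" "dist x (k x) \<le> R0 + \<epsilon>" for k
    using gapb that by blast
  have gap2: "k \<in> S" if "k \<in> \<Gamma>" "dist x (k x) \<le> R0 + \<epsilon>" for k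
    using gap[of k] that e1 unfolding S_def by auto
  define P where "P y \<longleftrightarrow> (\<exists>h\<in>H. dist (h x) y \<le> D)" for y
  have step: "P y'" if Py: "P y" and y'h: "y' \<in> QC_Hull \<Lambda>" and d: "dist y y' \<le> 4 * \<delta> + \<epsilon>" for y y'
  proof -
    obtain h where h: "h \<in> H" "dist (h x) y \<le> D" using Py unfolding P_def by blast
    obtain g' where g': "g' \<in> \<Gamma>" "dist (g' x) y' \<le> D"
      using cc xh y'h unfolding qc_cocompact_def \<Lambda>_def by blast
    have hG: "h \<in> \<Gamma>" using h HG by blast
    have "dist (h x) (g' x) \<le> dist (h x) y + dist y y' + dist y' (g' x)"
      using dist_triangle[of "h x" "g' x" y'] dist_triangle[of "h x" y' y] by simp
    then have "dist x ((inv h \<circ> g') x) \<le> R0 + \<epsilon>"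
      using dinv[OF hG, of g'] h(2) g'(2) d d0 unfolding R0_def by (simp add: dist_commute)
    then have "inv h \<circ> g' \<in> S" using gap2 Gcomp[OF Ginv[OF hG] g'(1)] by blast
    then have "h \<circ> (inv h \<circ> g') \<in> H" unfolding H_def using gen_comp gen_base h(1) H_def by blast
    then have "g' \<in> H" using hinv[OF hG, of g'] by (simp only:)
    then show ?thesis unfolding P_def using g'(2) by (auto simp: dist_commute)
  qed
  have along: "P (\<gamma> t)" if hl: "HL \<Lambda> \<gamma>" and P0: "P (\<gamma> t0)" for \<gamma> t t0
  proof -
    have l: "geodesic_line \<gamma>" using hl unfolding HL_def by blast
    have inh: "\<gamma> u \<in> QC_Hull \<Lambda>" for u using hl unfolding hull_iff by blast
    have dl: "dist (\<gamma> a) (\<gamma> b) = \<bar>a - b\<bar>" for a b using l unfolding geodesic_line_def by blast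
    have ind: "P (\<gamma> (t0 + real k * \<epsilon>)) \<and> P (\<gamma> (t0 - real k * \<epsilon>))" for k :: nat
    proof (induction k)
      case 0 then show ?case using P0 by simp
    next
      case (Suc k)
      have a: "dist (\<gamma> (t0 + real k * \<epsilon>)) (\<gamma> (t0 + real (Suc k) * \<epsilon>)) \<le> 4 * \<delta> + \<epsilon>"
        using dl d0 e0 by (simp add: algebra_simps)
      have b: "dist (\<gamma> (t0 - real k * \<epsilon>)) (\<gamma> (t0 - real (Suc k) * \<epsilon>)) \<le> 4 * \<delta> + \<epsilon>"
        using dl d0 e0 by (simp add: algebra_simps)
      show ?case using step[OF _ inh a] step[OF _ inh b] Suc by blast
    qed
    define k where "k = nat \<lfloor>\<bar>t - t0\<bar> / \<epsilon>\<rfloor>"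
    have k1: "real k * \<epsilon> \<le> \<bar>t - t0\<bar>"
    proof -
      have "real k \<le> \<bar>t - t0\<bar> / \<epsilon>" unfolding k_def using e0 by simp
      then show ?thesis using e0 by (simp add: le_divide_eq)
    qed
    have k2: "\<bar>t - t0\<bar> < real k * \<epsilon> + \<epsilon>"
    proof -
      have "\<bar>t - t0\<bar> / \<epsilon> < real k + 1" unfolding k_def using e0 by linarith
      then show ?thesis using e0 by (simp add: divide_less_eq algebra_simps)
    qed
    show ?thesis
    proof (cases "t \<ge> t0")
      case True
      have "dist (\<gamma> (t0 + real k * \<epsilon>)) (\<gamma> t) \<le> 4 * \<delta> + \<epsilon>" using dl k1 k2 True d0 by simp
      then show ?thesis using step[OF _ inh] ind by blast
    next
      case False
      have "dist (\<gamma> (t0 - real k * \<epsilon>)) (\<gamma> t) \<le> 4 * \<delta> + \<epsilon>" using dl k1 k2 False d0 by simp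
      then show ?thesis using step[OF _ inh] ind by blast
    qed
  qed
  have jump: "\<forall>t. P (\<beta> t)" if ha: "HL \<Lambda> \<alpha>" and hb: "HL \<Lambda> \<beta>" and Pa: "\<forall>t. P (\<alpha> t)"
    and eq: "gromov_equiv (\<lambda>n. \<alpha> (real n)) (\<lambda>n. \<beta> (real n))" for \<alpha> \<beta>
  proof -
    have la: "geodesic_line \<alpha>" and lb: "geodesic_line \<beta>" using ha hb unfolding HL_def by auto
    obtain s t where "dist (\<alpha> s) (\<beta> t) \<le> 4 * \<delta> + \<epsilon>"
      using close_asymptotic[OF hyp d0 la lb eq e0] by blast
    moreover have "\<beta> t \<in> QC_Hull \<Lambda>" using hb unfolding hull_iff by blast
    ultimately have "P (\<beta> t)" using step Pa by blast
    then show ?thesis using along[OF hb] by blast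
  qed
  have connect: "\<forall>t. P (\<beta> t)" if ha: "HL \<Lambda> \<alpha>" and hb: "HL \<Lambda> \<beta>" and Pa: "\<forall>t. P (\<alpha> t)" for \<alpha> \<beta>
  proof (cases "gromov_equiv (\<lambda>n. \<alpha> (real n)) (\<lambda>n. \<beta> (real n))")
    case True then show ?thesis using jump[OF ha hb Pa] by blast
  next
    case False
    have la: "geodesic_line \<alpha>" and lb: "geodesic_line \<beta>" using ha hb unfolding HL_def by auto
    obtain F where FL: "geodesic_line F" and e1: "gromov_equiv (\<lambda>n. \<alpha> (real n)) (\<lambda>n. F (- real n))"
      and e2: "gromov_equiv (\<lambda>n. F (real n)) (\<lambda>n. \<beta> (real n))"
      using line_exists[OF hyp d0 proper geod la lb False] by blast
    have c1: "gromov_class (\<lambda>n. F (real n)) = gromov_class (\<lambda>n. \<beta> (real n))"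
      using equiv_class[OF hyp e2] .
    have c2: "gromov_class (\<lambda>n. F (- real n)) = gromov_class (\<lambda>n. \<alpha> (real n))"
      using equiv_class[OF hyp e1] by simp
    have hF: "HL \<Lambda> F" unfolding HL_def using FL c1 c2 ha hb unfolding HL_def by simp
    have hF': "HL \<Lambda> (\<lambda>t. F (- t))" unfolding HL_def using line_reflect[OF FL] c1 c2 ha hb
      unfolding HL_def by simp
    have "\<forall>t. P (F (- t))" using jump[OF ha hF' Pa] e1 by simp
    then have "\<forall>t. P (F t)" by (metis minus_minus)
    then show ?thesis using jump[OF hF hb _ e2] by blast
  qed
  obtain \<alpha>0 t0 where h0: "HL \<Lambda> \<alpha>0" and x0: "x = \<alpha>0 t0" using xh unfolding hull_iff \<Lambda>_def by blast
  have "P x" unfolding P_def H_def using D0 generated_by.gen_id by force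
  then have Pa0: "\<forall>t. P (\<alpha>0 t)" using along[OF h0] x0 by blast
  have "\<Gamma> \<subseteq> H"
  proof
    fix g assume g: "g \<in> \<Gamma>"
    have hg: "HL \<Lambda> (g \<circ> \<alpha>0)" using HL_inv[OF G g] h0 unfolding \<Lambda>_def by blast
    have "P (g x)" using connect[OF h0 hg Pa0] x0 by simp
    then obtain h where h: "h \<in> H" "dist (h x) (g x) \<le> D" unfolding P_def by blast
    have hG: "h \<in> \<Gamma>" using h HG by blast
    have "inv h \<circ> g \<in> S" unfolding S_def R0_def
      using dinv[OF hG, of g] h(2) Gcomp[OF Ginv[OF hG] g] D0 d0 by simp
    then have "h \<circ> (inv h \<circ> g) \<in> H" unfolding H_def using gen_comp gen_base h(1) H_def by blast
    then show "g \<in> H" using hinv[OF hG, of g] by (simp only:)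
  qed
  then show ?thesis using HG unfolding H_def S_def R0_def by blast
qed

end
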